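(* Let $(G,L,v)$ be a reachable triple with $\deg_G(v)=2$, and let $i\in[4]$ be a color. Then one of the following holds: (1) the vertex $v$ and its two neighbors form a triangle in $G$; (2) $P(G,L,v,i,D)\le\frac{13}{27}$ for all integers $D\ge2$.
   Context: Colors are $[4]=\{1,2,3,4\}$. A list-coloring instance $(G,L)$ is a finite simple graph $G=(V,E)$ with $L:V\to 2^{[4]}$. For a vertex $v$, $G_v$ is $G$ with $v$ and its incident edges removed, and $G_{v,w}=(G_v)_w$. If $v$ has neighbors $v_1,\dots,v_d$ (in a fixed order), then for $k\in[d]$ and a color $j$, $L_{k,j}$ is the list assignment on $G_v$ with $L_{k,j}(v_\ell)=L(v_\ell)\setminus\{j\}$ for $\ell<k$ and $L_{k,j}(u)=L(u)$ for all other vertices $u$ (so $L_{1,j}=L$). A triple $(G,L,v)$ with $v\in V$ is reachable if $\deg_G(u)\le3$ and $|L(u)|\ge\deg_G(u)+1$ for every $u\in V$, and moreover $\deg_G(v)\le2$ and $|L(v)|\ge\deg_G(v)+2$. The procedure $P(G,L,v,i,D)$ ($i\in[4]$, $D$ an integer) is defined recursively (empty products equal $1$): (a) If $i\notin L(v)$, return $0$. Otherwise, if $D\le 0$ or $\deg_G(v)=0$, return $1/|L(v)|$. (b) If $\deg_G(v)=1$ with neighbor $v_1$: let $x=P(G_v,L,v_1,i,D-1)$. If $|L(v)|=2$, say $L(v)=\{i,j\}$, let $y=P(G_v,L,v_1,j,D-1)$ and return $\frac{1-x}{2-x-y}$. If $|L(v)|=4$, return $\frac{1-x}{3}$. If $|L(v)|=3$,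 let $j$ be the unique color in $[4]\setminus L(v)$, $y=P(G_v,L,v_1,j,D-1)$, and return $\frac{1-x}{2+y}$. (c) If $\deg_G(v)=2$: order its neighbors $v_1,v_2$ so that $\deg_G(v_1)\ge\deg_G(v_2)$ and, if $\deg_G(v_1)=\deg_G(v_2)=1$, so that $i\notin L(v_1)$ implies $i\notin L(v_2)$. Let $u_1,\dots,u_{d_1}$ be the neighbors of $v_1$ in $G_v$ (fixed order) and for $k\in[d_1]$, $w\in[4]$ let $L'_{k,w}$ be the list assignment on $G_{v,v_1}$ with $L'_{k,w}(u_\ell)=L(u_\ell)\setminus\{w\}$ for $\ell<k$ and $L'_{k,w}(u)=L(u)$ otherwise. Set $x_{k,w}=P(G_{v,v_1},L'_{k,w},u_k,w,D-1)$ for $k\in[d_1]$, $w\in L(v_1)$. For $j\in L(v)$ set $f_j=0$ if $j\notin L(v_1)$ and otherwise $f_j=\frac{\prod_{k=1}^{d_1}(1-x_{k,j})}{\sum_{w\in L(v_1)}\prod_{k=1}^{d_1}(1-x_{k,w})}$, and set $y_j=P(G_v,L_{2,j},v_2,j,D-1)$. Return $\frac{(1-f_i)(1-y_i)}{\sum_{j\in L(v)}(1-f_j)(1-y_j)}$. (d) If $\deg_G(v)=3$ with neighbors $v_1,v_2,v_3$: for $j\in L(v)$ let $x_j=P(G_v,L_{1,j},v_1,j,D-1)$, $y_j=P(G_v,L_{2,j},v_2,j,D-1)$, $z_j=P(G_v,L_{3,j},v_3,j,D-1)$, and return $\frac{(1-x_i)(1-y_i)(1-z_i)}{\sum_{j\in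 L(v)}(1-x_j)(1-y_j)(1-z_j)}$. For reachable triples, all recursive calls are again on reachable triples and case (d) never occurs. *)

theory Defs
  imports Complex_Main
begin

definition colors :: "nat set" where
  "colors = {1..4}"

definition wf_graph :: "'a set \<Rightarrow> 'a set set \<Rightarrow> bool" where
  "wf_graph V E \<longleftrightarrow> finite V \<and> (\<forall>e\<in>E. e \<subseteq> V \<and> card e = 2)"

definition nbrs :: "'a set set \<Rightarrow> 'a \<Rightarrow> 'a set" where
  "nbrs E v = {u. {u, v} \<in> E \<and> u \<noteq> v}"

definition deg :: "'a set set \<Rightarrow> 'a \<Rightarrow> nat" where
  "deg E v = card (nbrs E v)"

definition delv :: "'a set set \<Rightarrow> 'a \<Rightarrow> 'a set set" where
  "delv E v = {e \<in> E. v \<notin> e}"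

definition reachable :: "'a set \<Rightarrow> 'a set set \<Rightarrow> ('a \<Rightarrow> nat set) \<Rightarrow> 'a \<Rightarrow> bool" where
  "reachable V E L v \<longleftrightarrow> wf_graph V E \<and> v \<in> V \<and>
     (\<forall>u\<in>V. L u \<subseteq> colors \<and> deg E u \<le> 3 \<and> card (L u) \<ge> deg E u + 1) \<and>
     deg E v \<le> 2 \<and> card (L v) \<ge> deg E v + 2"

text \<open>The "fixed order" of neighbours: an arbitrary choice function listing the
  neighbours of a vertex in a graph (given by its edge set) without repetition.\<close>
definition valid_order :: "('a set set \<Rightarrow> 'a \<Rightarrow> 'a list) \<Rightarrow> bool" where
  "valid_order ord \<longleftrightarrow>
     (\<forall>E v. finite (nbrs E v) \<longrightarrow> distinct (ord E v) \<and> set (ord E v) = nbrs E v)"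

text \<open>L_{k,j} relative to a neighbour list ns (0-indexed k: the first k neighbours lose j).\<close>
definition Lmod :: "('a \<Rightarrow> nat set) \<Rightarrow> 'a list \<Rightarrow> nat \<Rightarrow> nat \<Rightarrow> 'a \<Rightarrow> nat set" where
  "Lmod L ns k j = (\<lambda>u. if u \<in> set (take k ns) then L u - {j} else L u)"

text \<open>Ordering rule of case (c): the pair (a,b) is admissible as (v1,v2).\<close>
definition ok_pair :: "'a set set \<Rightarrow> ('a \<Rightarrow> nat set) \<Rightarrow> nat \<Rightarrow> 'a \<Rightarrow> 'a \<Rightarrow> bool" where
  "ok_pair E L i a b \<longleftrightarrow> deg E a \<ge> deg E b \<and>
     (deg E a = 1 \<and> deg E b = 1 \<longrightarrow> (i \<notin> L a \<longrightarrow> i \<notin> L b))"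

text \<open>The procedure with fuel n = nat D (D \<le> 0 corresponds to fuel 0).
  Unreachable configurations return 0.\<close>
primrec Pn :: "nat \<Rightarrow> ('a set set \<Rightarrow> 'a \<Rightarrow> 'a list) \<Rightarrow> 'a set set \<Rightarrow> ('a \<Rightarrow> nat set)
                \<Rightarrow> 'a \<Rightarrow> nat \<Rightarrow> real" where
  "Pn 0 ord E L v i = (if i \<notin> L v then 0 else 1 / real (card (L v)))"
| "Pn (Suc n) ord E L v i =
   (if i \<notin> L v then 0
    else if deg E v = 0 then 1 / real (card (L v))
    else if deg E v = 1 then
      (let v1 = hd (ord E v); E' = delv E v; x = Pn n ord E' L v1 i in
       if card (L v) = 2 then
         (let j = the_elem (L v - {i}); y = Pn n ord E' L v1 j in (1 - x) / (2 - x - y))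
       else if card (L v) = 4 then (1 - x) / 3
       else if card (L v) = 3 then
         (let j = the_elem (colors - L v); y = Pn n ord E' L v1 j in (1 - x) / (2 + y))
       else 0)
    else if deg E v = 2 then
      (let a = ord E v ! 0; b = ord E v ! 1;
           v1 = (if ok_pair E L i a b then a else b);
           v2 = (if ok_pair E L i a b then b else a);
           E' = delv E v; E'' = delv E' v1;
           us = ord E' v1; d1 = length us;
           x = (\<lambda>k w. Pn n ord E'' (Lmod L us k w) (us ! k) w);
           pr = (\<lambda>w. \<Prod>k<d1. (1 - x k w));
           f = (\<lambda>j. if j \<notin> L v1 then 0 else pr j / (\<Sum>w\<in>L v1. pr w));
           y = (\<lambda>j. Pn n ord E' (Lmod L [v1, v2] 1 j) v2 j)
       in (1 - f i) * (1 - y i) / (\<Sum>j\<in>L v. (1 - f j) * (1 - y j)))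
    else if deg E v = 3 then
      (let ns = ord E v; E' = delv E v;
           z = (\<lambda>k j. Pn n ord E' (Lmod L ns k j) (ns ! k) j);
           g = (\<lambda>j. (1 - z 0 j) * (1 - z 1 j) * (1 - z 2 j))
       in g i / (\<Sum>j\<in>L v. g j))
    else 0)"

definition P :: "('a set set \<Rightarrow> 'a \<Rightarrow> 'a list) \<Rightarrow> 'a set set \<Rightarrow> ('a \<Rightarrow> nat set)
                \<Rightarrow> 'a \<Rightarrow> nat \<Rightarrow> int \<Rightarrow> real" where
  "P ord E L v i D = Pn (nat D) ord E L v i"

text \<open>v together with its neighbours forms a triangle (v has degree 2 here).\<close>
definition triangle_at :: "'a set set \<Rightarrow> 'a \<Rightarrow> bool" where
  "triangle_at E v \<longleftrightarrow> (\<forall>a\<in>nbrs E v. \<forall>b\<in>nbrs E v. a \<noteq> b \<longrightarrow> {a, b} \<in> E)"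

end

theory Submission
  imports Defs
begin
definition v1of :: "('a set set \<Rightarrow> 'a \<Rightarrow> 'a list) \<Rightarrow> 'a set set \<Rightarrow> ('a \<Rightarrow> nat set) \<Rightarrow> nat \<Rightarrow> 'a \<Rightarrow> 'a" where
  "v1of ord E L i u = (if ok_pair E L i (ord E u ! 0) (ord E u ! 1) then ord E u ! 0 else ord E u ! 1)"
definition v2of :: "('a set set \<Rightarrow> 'a \<Rightarrow> 'a list) \<Rightarrow> 'a set set \<Rightarrow> ('a \<Rightarrow> nat set) \<Rightarrow> nat \<Rightarrow> 'a \<Rightarrow> 'a" where
  "v2of ord E L i u = (if ok_pair E L i (ord E u ! 0) (ord E u ! 1) then ord E u ! 1 else ord E u ! 0)"
definition xof where
  "xof n ord E L i u k w = Pn n ord (delv (delv E u) (v1of ord E L i u)) (Lmod L (ord (delv E u) (v1of ord E L i u)) k w) (ord (delv E u) (v1of ord E L i u) ! k) w"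
definition prof where
  "prof n ord E L i u = (\<lambda>w. \<Prod>k<length (ord (delv E u) (v1of ord E L i u)). (1 - xof n ord E L i u k w))"
definition fof where
  "fof n ord E L i u j = (if j \<notin> L (v1of ord E L i u) then 0 else prof n ord E L i u j / (\<Sum>w\<in>L (v1of ord E L i u). prof n ord E L i u w))"
definition yof where
  "yof n ord E L i u j = Pn n ord (delv E u) (Lmod L [v1of ord E L i u, v2of ord E L i u] 1 j) (v2of ord E L i u) j"

lemma Pn_deg2:
  assumes "i \<in> L u" "deg E u = 2"
  shows "Pn (Suc n) ord E L u i = (1 - fof n ord E L i u i) * (1 - yof n ord E L i u i) /
     (\<Sum>j\<in>L u. (1 - fof n ord E L i u j) * (1 - yof n ord E L i u j))"
proof -
  have a: "(i \<notin> L u) = False" using assms by simp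
  have b: "((2::nat) = 0) = False" "((2::nat) = 1) = False" "((2::nat) = 2) = True" by simp_all
  show ?thesis
    unfolding fof_def prof_def xof_def yof_def v1of_def v2of_def
    by (simp only: Pn.simps(2) Let_def a b assms if_True if_False not_True_eq_False)
qed

lemma Pn_deg0:
  assumes "deg E u = 0"
  shows "Pn n ord E L u j = (if j \<notin> L u then 0 else 1 / real (card (L u)))"
  using assms by (cases n) auto

lemma Pn_deg1:
  assumes "j \<in> L u" "deg E u = 1"
  shows "Pn (Suc n) ord E L u j =
    (if card (L u) = 2 then (1 - Pn n ord (delv E u) L (hd (ord E u)) j) / (2 - Pn n ord (delv E u) L (hd (ord E u)) j - Pn n ord (delv E u) L (hd (ord E u)) (the_elem (L u - {j})))
     else if card (L u) = 4 then (1 - Pn n ord (delv E u) L (hd (ord E u)) j) / 3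
     else if card (L u) = 3 then (1 - Pn n ord (delv E u) L (hd (ord E u)) j) / (2 + Pn n ord (delv E u) L (hd (ord E u)) (the_elem (colors - L u)))
     else 0)"
  using assms by (simp add: Let_def)

lemma nbrs_sym: "y \<in> nbrs E z \<longleftrightarrow> z \<in> nbrs E y"
  by (auto simp: nbrs_def insert_commute)

lemma nbrs_delv: "z \<noteq> u \<Longrightarrow> nbrs (delv E u) z = nbrs E z - {u}"
  by (auto simp: nbrs_def delv_def)

lemma nbrs_delv_self: "nbrs (delv E u) u = {}"
  by (auto simp: nbrs_def delv_def)

lemma nbrs_delv_sub: "nbrs (delv E u) z \<subseteq> nbrs E z"
  by (auto simp: nbrs_def delv_def)

lemma colors_fin: "finite colors" and card_colors: "card colors = 4"
  by (auto simp: colors_def)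

lemma card_sub_colors: "A \<subseteq> colors \<Longrightarrow> card A \<le> 4"
  using card_mono[OF colors_fin] card_colors by metis

definition ginv :: "'a set set \<Rightarrow> ('a \<Rightarrow> nat set) \<Rightarrow> bool" where
  "ginv E L \<longleftrightarrow> (\<forall>z. finite (nbrs E z) \<and> deg E z \<le> 3 \<and>
      (nbrs E z \<noteq> {} \<longrightarrow> L z \<subseteq> colors \<and> deg E z + 1 \<le> card (L z)))"

definition tri :: "'a set set \<Rightarrow> ('a \<Rightarrow> nat set) \<Rightarrow> 'a \<Rightarrow> bool" where
  "tri E L u \<longleftrightarrow> ginv E L \<and> deg E u \<le> 2 \<and> L u \<subseteq> colors \<and> deg E u + 2 \<le> card (L u)"

lemma deg_delv_nb:
  assumes "finite (nbrs E z)" "u \<in> nbrs E z"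
  shows "deg (delv E u) z = deg E z - 1" "deg E z \<ge> 1"
proof -
  have "z \<noteq> u" using assms(2) by (auto simp: nbrs_def)
  then show "deg (delv E u) z = deg E z - 1"
    unfolding deg_def using assms by (simp add: nbrs_delv)
  show "deg E z \<ge> 1" unfolding deg_def using assms
    by (metis One_nat_def Suc_leI card_gt_0_iff empty_iff)
qed

lemma deg_delv_le:
  assumes "finite (nbrs E z)"
  shows "deg (delv E u) z \<le> deg E z"
  unfolding deg_def by (rule card_mono[OF assms nbrs_delv_sub])

lemma ginv_delv:
  assumes g: "ginv E L" and m: "\<forall>z. L' z = L z \<or> (u \<in> nbrs E z \<and> (\<exists>c. L' z = L z - {c}))"
  shows "ginv (delv E u) L'"
  unfolding ginv_def
proof (intro allI)
  fix z
  have fz: "finite (nbrs E z)" and d3: "deg E z \<le> 3" using g by (auto simp: ginv_def)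
  have A: "finite (nbrs (delv E u) z)" using fz nbrs_delv_sub finite_subset by metis
  have B: "deg (delv E u) z \<le> 3" using deg_delv_le[OF fz, of u] d3 by linarith
  have C: "nbrs (delv E u) z \<noteq> {} \<longrightarrow> L' z \<subseteq> colors \<and> deg (delv E u) z + 1 \<le> card (L' z)"
  proof
    assume ne: "nbrs (delv E u) z \<noteq> {}"
    then have ne2: "nbrs E z \<noteq> {}" by (metis nbrs_delv_sub subset_empty)
    then have Lz: "L z \<subseteq> colors" "deg E z + 1 \<le> card (L z)" using g by (auto simp: ginv_def)
    have fL: "finite (L z)" using Lz(1) colors_fin finite_subset by blast
    from m consider "L' z = L z" | c where "u \<in> nbrs E z" "L' z = L z - {c}" by blast
    then show "L' z \<subseteq> colors \<and> deg (delv E u) z + 1 \<le> card (L' z)"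
    proof cases
      case 1 then show ?thesis using Lz deg_delv_le[OF fz, of u] by simp
    next
      case 2
      have "card (L z) - 1 \<le> card (L z - {c})" by (simp add: card_Diff_singleton_if fL)
      then show ?thesis using Lz 2 deg_delv_nb[OF fz 2(1)] by auto
    qed
  qed
  show "finite (nbrs (delv E u) z) \<and> deg (delv E u) z \<le> 3 \<and>
      (nbrs (delv E u) z \<noteq> {} \<longrightarrow> L' z \<subseteq> colors \<and> deg (delv E u) z + 1 \<le> card (L' z))"
    using A B C by blast
qed

lemma tri_delv:
  assumes g: "ginv E L" and un: "u \<in> nbrs E z"
    and m: "\<forall>z. L' z = L z \<or> (u \<in> nbrs E z \<and> (\<exists>c. L' z = L z - {c}))"
    and eq: "L' z = L z"
  shows "tri (delv E u) L' z"
proof -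
  have fz: "finite (nbrs E z)" and d3: "deg E z \<le> 3" using g by (auto simp: ginv_def)
  have ne: "nbrs E z \<noteq> {}" using un by blast
  then have Lz: "L z \<subseteq> colors" "deg E z + 1 \<le> card (L z)" using g by (auto simp: ginv_def)
  have d': "deg (delv E u) z = deg E z - 1" "deg E z \<ge> 1" using deg_delv_nb[OF fz un] by auto
  show ?thesis unfolding tri_def
  proof (intro conjI)
    show "ginv (delv E u) L'" using ginv_delv[OF g m] .
    show "deg (delv E u) z \<le> 2" using d' d3 by linarith
    show "L' z \<subseteq> colors" using eq Lz by simp
    show "deg (delv E u) z + 2 \<le> card (L' z)" using d' Lz eq by simp
  qed
qed

lemma v12:
  assumes vo: "valid_order ord" and fin: "finite (nbrs E u)" and d: "deg E u = 2"
  shows "v1of ord E L i u \<noteq> v2of ord E L i u \<and> nbrs E u = {v1of ord E L i u, v2of ord E L i u}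
     \<and> deg E (v2of ord E L i u) \<le> deg E (v1of ord E L i u)"
proof -
  have di: "distinct (ord E u)" and st: "set (ord E u) = nbrs E u" using vo fin by (auto simp: valid_order_def)
  have "length (ord E u) = Suc (Suc 0)" using distinct_card[OF di] st d by (simp add: deg_def)
  then obtain a b where ab: "ord E u = [a, b]"
    by (auto simp: length_Suc_conv)
  have "a \<noteq> b" using di ab by simp
  moreover have "nbrs E u = {a, b}" using st ab by simp
  moreover have "deg E b \<le> deg E a" if "ok_pair E L i a b" using that by (simp add: ok_pair_def)
  moreover have "deg E a \<le> deg E b" if "\<not> ok_pair E L i a b" using that by (auto simp: ok_pair_def)
  ultimately show ?thesis unfolding v1of_def v2of_def ab
    by (cases "ok_pair E L i a b") (simp_all add: insert_commute)
qed

lemma half_pow_ge: "d \<le> 2 \<Longrightarrow> (1/4::real) \<le> (1/2)^d"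
  by (cases d; cases "d - 1"; simp; auto simp: numeral_2_eq_2)

lemma half_pow_card: "d \<le> 2 \<Longrightarrow> (3/4::real) \<le> real (d + 1) * (1/2)^d"
  by (cases d; cases "d - 1"; simp; auto simp: numeral_2_eq_2)

lemma fbound:
  fixes pr :: "nat \<Rightarrow> real" and A :: "nat set" and d :: nat
  assumes A: "A \<subseteq> colors" "d + 2 \<le> card A" "d \<le> 2"
    and pr: "\<forall>w. (1/2)^d \<le> pr w \<and> pr w \<le> 1"
    and f: "\<forall>j. f j = (if j \<notin> A then 0 else pr j / sum pr A)"
  shows "(\<forall>j. 0 \<le> f j \<and> f j \<le> 4/7) \<and> sum f colors = 1 \<and> (\<forall>j\<in>A. 1/16 \<le> f j)"
proof -
  have fA: "finite A" using A(1) colors_fin finite_subset by blast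
  have p4: "\<forall>w. 1/4 \<le> pr w" using pr half_pow_ge[OF A(3)] by (meson order_trans)
  have Ane: "A \<noteq> {}" using A(2) by auto
  have ppos: "\<forall>w\<in>A. 0 < pr w"
  proof
    fix w have "1/4 \<le> pr w" using p4 by blast
    then show "0 < pr w" by linarith
  qed
  have Spos: "sum pr A > 0" using sum_pos[OF fA Ane] ppos by blast
  have Sle: "sum pr A \<le> 4"
  proof -
    have "sum pr A \<le> real (card A) * 1" using sum_bounded_above[of A pr 1] pr by auto
    then show ?thesis using card_sub_colors[OF A(1)] by simp
  qed
  have key: "0 \<le> f j \<and> f j \<le> 4/7 \<and> (j \<in> A \<longrightarrow> 1/16 \<le> f j)" for j
  proof (cases "j \<in> A")
    case False then show ?thesis using f by simp
  next
    case True
    have R: "real (card (A - {j})) * (1/2)^d \<le> sum pr (A - {j})"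
      using sum_bounded_below[of "A - {j}" "(1/2)^d" pr] pr by auto
    have "card (A - {j}) = card A - 1" using True fA by simp
    then have "real (d + 1) \<le> real (card (A - {j}))" using A(2) by simp
    then have "real (d + 1) * (1/2)^d \<le> real (card (A - {j})) * (1/2)^d"
      by (simp add: mult_right_mono)
    then have R2: "3/4 \<le> sum pr (A - {j})" using R half_pow_card[OF A(3)] by linarith
    have Sj: "sum pr A = pr j + sum pr (A - {j})" using True fA by (simp add: sum.remove)
    have fj: "f j = pr j / sum pr A" using f True by simp
    have "pr j \<le> 1" using pr by blast
    then have "pr j / sum pr A \<le> 4/7" using Spos Sj R2 by (simp add: divide_le_eq)
    moreover have "1/16 \<le> pr j / sum pr A" using Spos Sle p4[rule_format, of j] by (simp add: le_divide_eq)
    moreover have "0 \<le> pr j / sum pr A" using Spos p4[rule_format, of j] by simp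
    ultimately show ?thesis using fj True by simp
  qed
  have "sum f colors = sum f A"
    using A(1) colors_fin f by (intro sum.mono_neutral_right) auto
  also have "\<dots> = sum (\<lambda>j. pr j / sum pr A) A" using f by simp
  also have "\<dots> = 1" using Spos by (simp add: sum_divide_distrib[symmetric])
  finally show ?thesis using key by auto
qed

lemma prod_bound:
  fixes x :: "nat \<Rightarrow> real"
  assumes "\<forall>k<d. 0 \<le> x k \<and> x k \<le> 1/2"
  shows "(1/2::real)^d \<le> (\<Prod>k<d. 1 - x k) \<and> (\<Prod>k<d. 1 - x k) \<le> 1"
proof
  have "(1/2::real)^d = (\<Prod>k<d. 1/2)" by simp
  also have "\<dots> \<le> (\<Prod>k<d. 1 - x k)" using assms by (intro prod_mono) auto
  finally show "(1/2::real)^d \<le> (\<Prod>k<d. 1 - x k)" .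
  show "(\<Prod>k<d. 1 - x k) \<le> 1" using assms by (intro prod_le_1) auto
qed

lemma sum_T:
  fixes h :: "nat \<Rightarrow> real"
  assumes "i \<in> colors"
  shows "sum h colors = h i + sum h (colors - {i})" "card (colors - {i}) = 3" "finite (colors - {i})"
  using assms colors_fin card_colors by (auto simp: sum.remove)

lemma ratio_basic:
  fixes f y :: "nat \<Rightarrow> real"
  assumes i: "i \<in> colors"
    and f: "\<forall>j. 0 \<le> f j \<and> f j \<le> 4/7" and sf: "sum f colors = 1"
    and y: "\<forall>j. 0 \<le> y j \<and> y j \<le> 1/2"
  shows "0 \<le> (1 - f i) * (1 - y i) / (\<Sum>j\<in>colors. (1 - f j) * (1 - y j))
    \<and> (1 - f i) * (1 - y i) / (\<Sum>j\<in>colors. (1 - f j) * (1 - y j)) \<le> 1/2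
    \<and> 1/15 \<le> (1 - f i) * (1 - y i) / (\<Sum>j\<in>colors. (1 - f j) * (1 - y j))"
proof -
  define T where "T = colors - {i}"
  define g where "g = (\<lambda>j. (1 - f j) * (1 - y j))"
  have T: "finite T" "card T = 3" using sum_T[OF i] T_def by auto
  have sg: "sum g colors = g i + sum g T" using sum_T[OF i] T_def by auto
  have sfT: "sum f T = 1 - f i" using sum_T(1)[OF i, of f] sf T_def by simp
  have gl: "(1 - f j) / 2 \<le> g j" for j
  proof -
    have a: "0 \<le> 1 - f j" "1/2 \<le> 1 - y j" using f[rule_format, of j] y[rule_format, of j] by linarith+
    have "(1 - f j) * (1/2) \<le> (1 - f j) * (1 - y j)" using mult_left_mono[OF a(2) a(1)] .
    then show ?thesis by (simp add: g_def)
  qed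
  have gu: "g j \<le> 1 \<and> 0 \<le> g j" for j
  proof -
    have a: "0 \<le> 1 - f j" "1 - f j \<le> 1" "0 \<le> 1 - y j" "1 - y j \<le> 1"
      using f[rule_format, of j] y[rule_format, of j] by linarith+
    show ?thesis unfolding g_def using a by (simp add: mult_le_one)
  qed
  have "sum (\<lambda>j. (1 - f j) / 2) T \<le> sum g T" using gl by (intro sum_mono) auto
  moreover have "sum (\<lambda>j. (1 - f j) / 2) T = (3 - sum f T) / 2"
    using T by (simp add: sum_subtractf sum_divide_distrib[symmetric])
  ultimately have S1': "(2 + f i)/2 \<le> sum g T" using sfT by simp
  have "1 \<le> (2 + f i)/2" using f[rule_format, of i] by simp
  then have S1: "1 \<le> sum g T" using S1' by linarith
  have S3: "sum g T \<le> 3" using sum_bounded_above[of T g 1] gu T by auto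
  have gi: "3/14 \<le> g i"
  proof -
    have a: "3/7 \<le> 1 - f i" "1/2 \<le> 1 - y i" using f[rule_format, of i] y[rule_format, of i] by linarith+
    have "(3/7) * (1/2) \<le> (1 - f i) * (1 - y i)" by (rule mult_mono[OF a(1) a(2)]) (use a in auto)
    then show ?thesis unfolding g_def by simp
  qed
  have "g i / (g i + sum g T) \<le> 1/2" using gu[of i] S1 by (simp add: divide_le_eq)
  moreover have "1/15 \<le> g i / (g i + sum g T)" using gi S3 S1 gu[of i] by (simp add: le_divide_eq)
  moreover have "0 \<le> g i / (g i + sum g T)" using gu[of i] S1 by simp
  ultimately show ?thesis using sg unfolding g_def by simp
qed

lemma Pn_notin: "j \<notin> L u \<Longrightarrow> Pn n ord E L u j = 0"
  by (cases n) auto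

declare Pn.simps[simp del]

lemma nth_notin_take:
  assumes "distinct xs" "k < length xs"
  shows "xs ! k \<notin> set (take k xs)"
proof -
  have e: "xs = take k xs @ xs ! k # drop (Suc k) xs" using assms(2) by (rule id_take_nth_drop)
  have "distinct (take k xs @ xs ! k # drop (Suc k) xs)" by (subst e[symmetric]) (rule assms(1))
  then show ?thesis by auto
qed

lemma deg2_facts:
  assumes vo: "valid_order ord" and t: "tri E L u" and d: "deg E u = 2"
    and IH: "\<And>E L u j. tri E L u \<Longrightarrow> 0 \<le> Pn n ord E L u j \<and> Pn n ord E L u j \<le> 1/2"
  shows "(\<forall>j. 0 \<le> fof n ord E L i u j \<and> fof n ord E L i u j \<le> 4/7) \<and> sum (fof n ord E L i u) colors = 1
     \<and> (\<forall>j\<in>L (v1of ord E L i u). 1/16 \<le> fof n ord E L i u j)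
     \<and> (\<forall>j. 0 \<le> yof n ord E L i u j \<and> yof n ord E L i u j \<le> 1/2)"
proof -
  define v1 where "v1 = v1of ord E L i u"
  define v2 where "v2 = v2of ord E L i u"
  define E' where "E' = delv E u"
  define us where "us = ord E' v1"
  have g: "ginv E L" using t by (simp add: tri_def)
  have fu: "finite (nbrs E u)" using g by (simp add: ginv_def)
  have V: "v1 \<noteq> v2" "nbrs E u = {v1, v2}" using v12[OF vo fu d, of L i] v1_def v2_def by auto
  have a1: "v1 \<in> nbrs E u" and a2: "v2 \<in> nbrs E u" using V by blast+
  have uv1: "u \<in> nbrs E v1" using nbrs_sym[THEN iffD1, OF a1] .
  have uv2: "u \<in> nbrs E v2" using nbrs_sym[THEN iffD1, OF a2] .
  have fv1: "finite (nbrs E v1)" "deg E v1 \<le> 3" using g by (auto simp: ginv_def)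
  have fv1b: "L v1 \<subseteq> colors" "deg E v1 + 1 \<le> card (L v1)" using g uv1 by (auto simp: ginv_def)
  have dv1: "deg E' v1 = deg E v1 - 1" "deg E v1 \<ge> 1" using deg_delv_nb[OF fv1(1) uv1] E'_def by auto
  have g': "ginv E' L" using ginv_delv[OF g, of L u] E'_def by auto
  have fv1': "finite (nbrs E' v1)" using g' by (simp add: ginv_def)
  have us: "distinct us" "set us = nbrs E' v1" using vo fv1' us_def by (auto simp: valid_order_def)
  have lus: "length us = deg E' v1" using distinct_card[OF us(1)] us(2) by (simp add: deg_def)
  have xb: "0 \<le> xof n ord E L i u k w \<and> xof n ord E L i u k w \<le> 1/2" if k: "k < length us" for k w
  proof -
    have "us ! k \<in> nbrs E' v1" using k us nth_mem by blast
    then have a: "v1 \<in> nbrs E' (us ! k)" by (rule nbrs_sym[THEN iffD1])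
    have m: "\<forall>z. Lmod L us k w z = L z \<or> (v1 \<in> nbrs E' z \<and> (\<exists>c. Lmod L us k w z = L z - {c}))"
    proof
      fix z
      show "Lmod L us k w z = L z \<or> (v1 \<in> nbrs E' z \<and> (\<exists>c. Lmod L us k w z = L z - {c}))"
      proof (cases "z \<in> set (take k us)")
        case True
        have "set (take k us) \<subseteq> set us" by (rule set_take_subset)
        then have "z \<in> nbrs E' v1" using True us(2) by (metis subsetD)
        then have v: "v1 \<in> nbrs E' z" by (rule nbrs_sym[THEN iffD1])
        have "Lmod L us k w z = L z - {w}" using True by (simp add: Lmod_def)
        then show ?thesis using v by blast
      next
        case False
        have "Lmod L us k w z = L z" using False by (simp add: Lmod_def)
        then show ?thesis by blast
      qed
    qed
    have eq: "Lmod L us k w (us ! k) = L (us ! k)" using nth_notin_take[OF us(1) k] by (simp add: Lmod_def)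
    have "tri (delv E' v1) (Lmod L us k w) (us ! k)" by (rule tri_delv[OF g' a m eq])
    then show ?thesis using IH unfolding xof_def E'_def us_def v1_def by blast
  qed
  have pb: "(1/2)^(deg E' v1) \<le> prof n ord E L i u w \<and> prof n ord E L i u w \<le> 1" for w
  proof -
    have "\<forall>k<length us. 0 \<le> xof n ord E L i u k w \<and> xof n ord E L i u k w \<le> 1/2" using xb by blast
    from prod_bound[OF this] show ?thesis using lus unfolding prof_def us_def E'_def v1_def by simp
  qed
  have fd: "\<forall>j. fof n ord E L i u j = (if j \<notin> L v1 then 0 else prof n ord E L i u j / sum (prof n ord E L i u) (L v1))"
    by (simp add: fof_def v1_def)
  have F: "(\<forall>j. 0 \<le> fof n ord E L i u j \<and> fof n ord E L i u j \<le> 4/7) \<and> sum (fof n ord E L i u) colors = 1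
     \<and> (\<forall>j\<in>L v1. 1/16 \<le> fof n ord E L i u j)"
  proof (rule fbound[OF fv1b(1) _ _ _ fd])
    show "deg E' v1 + 2 \<le> card (L v1)" using fv1b dv1 by linarith
    show "deg E' v1 \<le> 2" using dv1 fv1 by linarith
    show "\<forall>w. (1/2)^(deg E' v1) \<le> prof n ord E L i u w \<and> prof n ord E L i u w \<le> 1" using pb by blast
  qed
  have Y: "0 \<le> yof n ord E L i u j \<and> yof n ord E L i u j \<le> 1/2" for j
  proof -
    have m: "\<forall>z. Lmod L [v1, v2] 1 j z = L z \<or> (u \<in> nbrs E z \<and> (\<exists>c. Lmod L [v1, v2] 1 j z = L z - {c}))"
      using uv1 by (auto simp: Lmod_def)
    have eq: "Lmod L [v1, v2] 1 j v2 = L v2" using V by (simp add: Lmod_def)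
    have "tri (delv E u) (Lmod L [v1, v2] 1 j) v2" by (rule tri_delv[OF g uv2 m eq])
    then show ?thesis using IH unfolding yof_def v1_def v2_def by blast
  qed
  show ?thesis using F Y v1_def by blast
qed

definition lb :: "nat \<Rightarrow> real" where "lb d = (if d \<le> 1 then 1/6 else 1/15)"

lemma inv_card:
  assumes "2 \<le> c" "c \<le> (4::nat)"
  shows "lb d \<le> 1 / real c \<and> 1 / real c \<le> 1/2 \<and> 0 \<le> 1 / real c"
proof -
  have "real c \<le> 4" "2 \<le> real c" using assms by simp_all
  then have "1/4 \<le> 1 / real c" "1 / real c \<le> 1/2" by (simp_all add: field_simps)
  then show ?thesis by (auto simp: lb_def)
qed

lemma M:
  assumes vo: "valid_order ord"
  shows "tri E L u \<Longrightarrow> 0 \<le> Pn n ord E L u j \<and> Pn n ord E L u j \<le> 1/2 \<and> (j \<in> L u \<longrightarrow> lb (deg E u) \<le> Pn n ord E L u j)"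
proof (induction n arbitrary: E L u j)
  case 0
  have c: "2 \<le> card (L u)" "card (L u) \<le> 4" using 0 card_sub_colors by (auto simp: tri_def)
  show ?case using inv_card[OF c] by (simp add: Pn.simps(1))
next
  case (Suc n)
  have t: "tri E L u" by fact
  have c: "2 \<le> card (L u)" "card (L u) \<le> 4" using t card_sub_colors by (auto simp: tri_def)
  have IH: "\<And>E L u j. tri E L u \<Longrightarrow> 0 \<le> Pn n ord E L u j \<and> Pn n ord E L u j \<le> 1/2" using Suc.IH by blast
  have g: "ginv E L" using t by (simp add: tri_def)
  have fu: "finite (nbrs E u)" using g by (simp add: ginv_def)
  have "deg E u \<le> 2" using t by (simp add: tri_def)
  then consider "deg E u = 0" | "deg E u = 1" | "deg E u = 2" by linarith
  then show ?case
  proof cases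
    case 1
    then show ?thesis using inv_card[OF c] Pn_deg0[OF 1] by simp
  next
    case 2
    show ?thesis
    proof (cases "j \<in> L u")
      case False then show ?thesis by (simp add: Pn_notin)
    next
      case True
      have c3: "3 \<le> card (L u)" using t 2 by (simp add: tri_def)
      define v1 where "v1 = hd (ord E u)"
      have di: "distinct (ord E u)" and st: "set (ord E u) = nbrs E u" using vo fu by (auto simp: valid_order_def)
      have "length (ord E u) = 1" using distinct_card[OF di] st 2 by (simp add: deg_def)
      then have "ord E u = [v1]" unfolding v1_def by (cases "ord E u") auto
      then have "v1 \<in> nbrs E u" using st by auto
      then have uv1: "u \<in> nbrs E v1" by (rule nbrs_sym[THEN iffD1])
      have "tri (delv E u) L v1" by (rule tri_delv[OF g uv1]) auto
      then have xy: "\<And>c. 0 \<le> Pn n ord (delv E u) L v1 c \<and> Pn n ord (delv E u) L v1 c \<le> 1/2" using IH by blast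
      define x where "x = Pn n ord (delv E u) L v1 j"
      have x: "0 \<le> x" "x \<le> 1/2" using xy x_def by auto
      have P: "Pn (Suc n) ord E L u j = (if card (L u) = 4 then (1 - x) / 3
           else (1 - x) / (2 + Pn n ord (delv E u) L v1 (the_elem (colors - L u))))"
        using Pn_deg1[where j=j and L=L and u=u and E=E and n=n and ord=ord, OF True 2] c3 c by (simp add: x_def v1_def)
      consider "card (L u) = 4" | "card (L u) = 3" using c c3 by linarith
      then show ?thesis
      proof cases
        case 1
        then show ?thesis using P x 2 by (simp add: lb_def)
      next
        case 3: 2
        define y where "y = Pn n ord (delv E u) L v1 (the_elem (colors - L u))"
        have y: "0 \<le> y" "y \<le> 1/2" using xy y_def by auto
        have P3: "Pn (Suc n) ord E L u j = (1 - x) / (2 + y)" using P 3 y_def by simp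
        have "(1 - x) / (2 + y) \<le> 1/2" using x y by (simp add: divide_le_eq)
        moreover have "1/6 \<le> (1 - x) / (2 + y)" using x y by (simp add: le_divide_eq)
        moreover have "0 \<le> (1 - x) / (2 + y)" using x y by simp
        ultimately show ?thesis using P3 2 by (simp add: lb_def)
      qed
    qed
  next
    case 3
    show ?thesis
    proof (cases "j \<in> L u")
      case False then show ?thesis by (simp add: Pn_notin)
    next
      case True
      have c4: "4 \<le> card (L u)" "L u \<subseteq> colors" using t 3 by (auto simp: tri_def)
      have Lu: "L u = colors" using card_seteq[OF colors_fin c4(2)] c4(1) card_colors by simp
      have j: "j \<in> colors" using True Lu by simp
      have F: "(\<forall>j'. 0 \<le> fof n ord E L j u j' \<and> fof n ord E L j u j' \<le> 4/7) \<and> sum (fof n ord E L j u) colors = 1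
         \<and> (\<forall>j'. 0 \<le> yof n ord E L j u j' \<and> yof n ord E L j u j' \<le> 1/2)"
        using deg2_facts[OF vo t 3 IH, of j] by blast
      have R: "0 \<le> Pn (Suc n) ord E L u j \<and> Pn (Suc n) ord E L u j \<le> 1/2 \<and> 1/15 \<le> Pn (Suc n) ord E L u j"
        unfolding Pn_deg2[where i=j and L=L and u=u and E=E and n=n and ord=ord, OF True 3] Lu
        by (rule ratio_basic[OF j]) (use F in blast)+
      then show ?thesis using 3 by (simp add: lb_def)
    qed
  qed
qed

lemma arA: "(2 + a)/26 \<le> R \<Longrightarrow> S = (2+a)/2 + R \<Longrightarrow> g \<le> 1 - a \<Longrightarrow> 0 \<le> a \<Longrightarrow> 14*g \<le> 13*(S::real)"
  by (simp add: field_simps)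
lemma arC: "3/14 \<le> R \<Longrightarrow> S = (2+a)/2 + R \<Longrightarrow> g \<le> 1 - a \<Longrightarrow> 0 \<le> a \<Longrightarrow> 14*g \<le> 13*(S::real)"
  by (simp add: field_simps)
lemma arC': "(1 - x)/2 \<le> R \<Longrightarrow> x \<le> 4/7 \<Longrightarrow> 3/14 \<le> (R::real)"
  by (simp add: field_simps)
lemma arB: "1/12 \<le> R \<Longrightarrow> S = (2+a)/2 + R \<Longrightarrow> g \<le> 1 - a \<Longrightarrow> 0 \<le> a \<Longrightarrow> 14*g \<le> 13*(S::real)"
  by (simp add: field_simps)
lemma arB': "(1 - x)/12 \<le> r1 \<Longrightarrow> (1 - y)/12 \<le> r2 \<Longrightarrow> r1 + r2 \<le> R \<Longrightarrow> x + y \<le> 1 \<Longrightarrow> 1/12 \<le> (R::real)"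
  by (simp add: field_simps)
lemma arD: "1/16 \<le> a \<Longrightarrow> 0 \<le> R \<Longrightarrow> S = (2+a)/2 + R \<Longrightarrow> g \<le> 1 - a \<Longrightarrow> 14*g \<le> 13*(S::real)"
  by (simp add: field_simps)
lemma arE: "0 \<le> R \<Longrightarrow> 0 \<le> a \<Longrightarrow> S = (2+a)/2 + R \<Longrightarrow> 0 < (S::real)"
  by (simp add: field_simps)

lemma final_ineq:
  fixes f y :: "nat \<Rightarrow> real"
  assumes i: "i \<in> colors"
    and f: "\<forall>j. 0 \<le> f j \<and> f j \<le> 4/7" and sf: "sum f colors = 1"
    and y: "\<forall>j. 0 \<le> y j \<and> y j \<le> 1/2"
    and H: "(\<forall>k\<in>colors - {i}. y k \<le> 6/13) \<or> (\<exists>c\<in>colors - {i}. y c = 0)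
      \<or> (\<exists>k1\<in>colors - {i}. \<exists>k2\<in>colors - {i}. k1 \<noteq> k2 \<and> y k1 \<le> 5/12 \<and> y k2 \<le> 5/12)
      \<or> 1/16 \<le> f i"
  shows "(1 - f i) * (1 - y i) / (\<Sum>j\<in>colors. (1 - f j) * (1 - y j)) \<le> 13/27"
proof -
  define T where "T = colors - {i}"
  define g where "g = (\<lambda>j. (1 - f j) * (1 - y j))"
  define r where "r = (\<lambda>j. (1 - f j) * (1/2 - y j))"
  have T: "finite T" "card T = 3" using sum_T[OF i] T_def by auto
  have sg: "sum g colors = g i + sum g T" using sum_T[OF i] T_def by auto
  have sfT: "sum f T = 1 - f i" using sum_T(1)[OF i, of f] sf T_def by simp
  have fj: "0 \<le> f j" "f j \<le> 4/7" "0 \<le> y j" "y j \<le> 1/2" for j using f y by auto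
  have r0: "0 \<le> r j" for j unfolding r_def using fj[of j] by simp
  have gr: "g j = (1 - f j) / 2 + r j" for j unfolding g_def r_def by (simp add: algebra_simps)
  have "sum g T = sum (\<lambda>j. (1 - f j) / 2) T + sum r T" unfolding gr by (simp add: sum.distrib)
  moreover have "sum (\<lambda>j. (1 - f j) / 2) T = (3 - sum f T) / 2"
    using T by (simp add: sum_subtractf sum_divide_distrib[symmetric])
  ultimately have S: "sum g T = (2 + f i) / 2 + sum r T" using sfT by simp
  have R0: "0 \<le> sum r T" using r0 by (simp add: sum_nonneg)
  have gi: "g i \<le> 1 - f i" "0 \<le> g i" unfolding g_def using fj[of i]
    by (simp_all add: mult_left_le)
  have fi: "0 \<le> f i" "f i \<le> 4/7" using fj by auto
  have main: "14 * g i \<le> 13 * sum g T"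
  proof -
    from H consider (a) "\<forall>k\<in>T. y k \<le> 6/13" | (c) c where "c \<in> T" "y c = 0"
      | (b) k1 k2 where "k1 \<in> T" "k2 \<in> T" "k1 \<noteq> k2" "y k1 \<le> 5/12" "y k2 \<le> 5/12"
      | (d) "1/16 \<le> f i" unfolding T_def by blast
    then show ?thesis
    proof cases
      case a
      have "(1 - f k) / 26 \<le> r k" if "k \<in> T" for k
      proof -
        have "1/26 \<le> 1/2 - y k" using a that by auto
        then have "(1 - f k) * (1/26) \<le> (1 - f k) * (1/2 - y k)"
          using fj[of k] by (intro mult_left_mono) auto
        then show ?thesis unfolding r_def by simp
      qed
      then have "sum (\<lambda>k. (1 - f k) / 26) T \<le> sum r T" by (intro sum_mono) auto
      moreover have "sum (\<lambda>k. (1 - f k) / 26) T = (3 - sum f T) / 26"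
        using T by (simp add: sum_subtractf sum_divide_distrib[symmetric])
      ultimately have "(2 + f i) / 26 \<le> sum r T" using sfT by simp
      then show ?thesis using arA[OF _ S gi(1) fi(1)] by blast
    next
      case c
      have "r c = (1 - f c) / 2" unfolding r_def using c by simp
      moreover have "r c \<le> sum r T" using c T r0 by (intro member_le_sum) auto
      ultimately have "(1 - f c) / 2 \<le> sum r T" by simp
      then have "3/14 \<le> sum r T" using fj(2)[of c] arC' by blast
      then show ?thesis using arC[OF _ S gi(1) fi(1)] by blast
    next
      case b
      have rk: "(1 - f k) / 12 \<le> r k" if "y k \<le> 5/12" for k
      proof -
        have "1/12 \<le> 1/2 - y k" using that by auto
        then have "(1 - f k) * (1/12) \<le> (1 - f k) * (1/2 - y k)"
          using fj[of k] by (intro mult_left_mono) auto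
        then show ?thesis unfolding r_def by simp
      qed
      have "sum r {k1, k2} \<le> sum r T" using b T r0 by (intro sum_mono2) auto
      then have "r k1 + r k2 \<le> sum r T" using b by simp
      moreover have "sum f {k1, k2} \<le> sum f colors" using b T_def colors_fin fj
        by (intro sum_mono2) auto
      then have "f k1 + f k2 \<le> 1" using b sf by simp
      ultimately have "1/12 \<le> sum r T" using arB'[OF rk[OF b(4)] rk[OF b(5)]] by blast
      then show ?thesis using arB[OF _ S gi(1) fi(1)] by blast
    next
      case d
      then show ?thesis using arD[OF _ R0 S gi(1)] by blast
    qed
  qed
  have "0 < sum g T" using arE[OF R0 fi(1) S] .
  then have "g i / (g i + sum g T) \<le> 13/27" using main gi by (simp add: divide_le_eq)
  then show ?thesis using sg unfolding g_def by simp
qed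

lemma yA1: "0 \<le> x \<Longrightarrow> 1/6 \<le> x' \<Longrightarrow> (1 - x)/(2 + x') \<le> (6/13::real)"
  by (simp add: field_simps)
lemma yA2: "1/15 \<le> x \<Longrightarrow> 1/15 \<le> x' \<Longrightarrow> (1 - x)/(2 + x') \<le> (6/13::real)"
  by (simp add: field_simps)
lemma yB: "1/6 \<le> x \<Longrightarrow> (1 - x)/(2 + 0) \<le> (5/12::real)"
  by (simp add: field_simps)
lemma yC: "0 \<le> x \<Longrightarrow> (1 - x)/3 \<le> (6/13::real)"
  by (simp add: field_simps)
lemma yD: "3 \<le> c \<Longrightarrow> 1 / real c \<le> (6/13::real)"
  by (simp add: field_simps)

lemma main_bound:
  assumes vo: "valid_order ord" and t: "tri E L v" and d2: "deg E v = 2" and i: "i \<in> colors"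
    and nE: "{v1of ord E L i v, v2of ord E L i v} \<notin> E"
  shows "Pn (Suc (Suc n)) ord E L v i \<le> 13/27"
proof -
  define N where "N = Suc n"
  define v1 where "v1 = v1of ord E L i v"
  define v2 where "v2 = v2of ord E L i v"
  define E' where "E' = delv E v"
  have g: "ginv E L" using t by (simp add: tri_def)
  have fv: "finite (nbrs E v)" using g by (simp add: ginv_def)
  have V: "v1 \<noteq> v2" "nbrs E v = {v1, v2}" "deg E v2 \<le> deg E v1"
    using v12[OF vo fv d2, of L i] v1_def v2_def by auto
  have nE': "{v1, v2} \<notin> E" using nE v1_def v2_def by simp
  have Lsub: "L v \<subseteq> colors" and Lv: "4 \<le> card (L v)" using t d2 by (auto simp: tri_def)
  have Lvc: "L v = colors" using card_seteq[OF colors_fin Lsub] Lv card_colors by simp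
  have iL: "i \<in> L v" using i Lvc by simp
  have a1: "v1 \<in> nbrs E v" and a2: "v2 \<in> nbrs E v" using V by blast+
  have vv1: "v \<in> nbrs E v1" using nbrs_sym[THEN iffD1, OF a1] .
  have vv2: "v \<in> nbrs E v2" using nbrs_sym[THEN iffD1, OF a2] .
  have v1n2: "v1 \<notin> nbrs E v2" using nE' by (auto simp: nbrs_def)
  have IHN: "\<And>E L u j. tri E L u \<Longrightarrow> 0 \<le> Pn N ord E L u j \<and> Pn N ord E L u j \<le> 1/2"
    using M[OF vo] by blast
  have F: "(\<forall>j. 0 \<le> fof N ord E L i v j \<and> fof N ord E L i v j \<le> 4/7) \<and> sum (fof N ord E L i v) colors = 1
     \<and> (\<forall>j\<in>L v1. 1/16 \<le> fof N ord E L i v j)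
     \<and> (\<forall>j. 0 \<le> yof N ord E L i v j \<and> yof N ord E L i v j \<le> 1/2)"
    using deg2_facts[OF vo t d2 IHN, of i] v1_def by blast
  define y where "y = yof N ord E L i v"
  define Lj where "Lj = (\<lambda>j. Lmod L [v1, v2] 1 j)"
  have yeq: "y j = Pn N ord E' (Lj j) v2 j" for j
    by (simp add: y_def yof_def v1_def v2_def E'_def Lj_def)
  have Lj1: "Lj j z = (if z = v1 then L z - {j} else L z)" for j z by (simp add: Lj_def Lmod_def)
  have Lj2: "Lj j v2 = L v2" for j using V(1) Lj1 by simp
  have tj: "tri E' (Lj j) v2" for j
  proof -
    have m: "\<forall>z. Lj j z = L z \<or> (v \<in> nbrs E z \<and> (\<exists>c. Lj j z = L z - {c}))"
      using vv1 Lj1 by auto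
    show ?thesis unfolding E'_def by (rule tri_delv[OF g vv2 m Lj2])
  qed
  have fv2: "finite (nbrs E v2)" "deg E v2 \<le> 3" using g by (auto simp: ginv_def)
  have dv2: "deg E' v2 = deg E v2 - 1" "deg E v2 \<ge> 1" using deg_delv_nb[OF fv2(1) vv2] E'_def by auto
  have tL2: "deg E' v2 \<le> 2" "L v2 \<subseteq> colors" "deg E' v2 + 2 \<le> card (L v2)"
    using tj[of 0] Lj2[of 0] by (auto simp: tri_def)
  have fL2: "finite (L v2)" using tL2(2) colors_fin finite_subset by blast
  have T3: "card (colors - {i}) = 3" "finite (colors - {i})" using sum_T[OF i] by auto
  have H: "(\<forall>k\<in>colors - {i}. y k \<le> 6/13) \<or> (\<exists>c\<in>colors - {i}. y c = 0)
      \<or> (\<exists>k1\<in>colors - {i}. \<exists>k2\<in>colors - {i}. k1 \<noteq> k2 \<and> y k1 \<le> 5/12 \<and> y k2 \<le> 5/12)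
      \<or> 1/16 \<le> fof N ord E L i v i"
  proof -
    consider "deg E' v2 = 0" | "deg E' v2 = 1" | "deg E' v2 = 2" using tL2(1) by linarith
    then show ?thesis
    proof cases
      case 1
      have y0: "y j = (if j \<notin> L v2 then 0 else 1 / real (card (L v2)))" for j
        using yeq[of j] Pn_deg0[OF 1, of N ord "Lj j" j] Lj2[of j] by simp
      have c2: "2 \<le> card (L v2)" using tL2 1 by simp
      show ?thesis
      proof (cases "3 \<le> card (L v2)")
        case True
        have "y k \<le> 6/13" for k using y0[of k] yD[OF True] by simp
        then show ?thesis by blast
      next
        case False
        have "\<not> colors - {i} \<subseteq> L v2"
        proof
          assume "colors - {i} \<subseteq> L v2"
          then have "card (colors - {i}) \<le> card (L v2)" using card_mono[OF fL2] by blast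
          then show False using T3 False by simp
        qed
        then obtain c where "c \<in> colors - {i}" "c \<notin> L v2" by blast
        then show ?thesis using y0[of c] by auto
      qed
    next
      case 2
      define w where "w = hd (ord E' v2)"
      define E'' where "E'' = delv E' v2"
      have g': "ginv E' L" using ginv_delv[OF g, of L v] E'_def by auto
      have fv2': "finite (nbrs E' v2)" using g' by (simp add: ginv_def)
      have di: "distinct (ord E' v2)" and st: "set (ord E' v2) = nbrs E' v2" using vo fv2' by (auto simp: valid_order_def)
      have "length (ord E' v2) = 1" using distinct_card[OF di] st 2 by (simp add: deg_def)
      then have "ord E' v2 = [w]" unfolding w_def by (cases "ord E' v2") auto
      then have wn: "w \<in> nbrs E' v2" using st by auto
      then have v2w: "v2 \<in> nbrs E' w" by (rule nbrs_sym[THEN iffD1])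
      have "w \<in> nbrs E v2" using wn nbrs_delv_sub[of E v v2] unfolding E'_def by blast
      then have wv1: "w \<noteq> v1" using v1n2 by blast
      have Ljw: "Lj j w = L w" for j using Lj1 wv1 by simp
      have tw: "tri E'' (Lj j) w" for j
      proof -
        have gj: "ginv E' (Lj j)" using tj[of j] by (simp add: tri_def)
        show ?thesis unfolding E''_def by (rule tri_delv[OF gj v2w]) auto
      qed
      define e where "e = deg E'' w"
      have te: "e \<le> 2" "L w \<subseteq> colors" "e + 2 \<le> card (L w)" using tw[of 0] Ljw[of 0] e_def by (auto simp: tri_def)
      have Mw: "0 \<le> Pn n ord E'' (Lj j) w col \<and> Pn n ord E'' (Lj j) w col \<le> 1/2 \<and>
          (col \<in> L w \<longrightarrow> lb e \<le> Pn n ord E'' (Lj j) w col)" for j col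
        using M[OF vo tw[of j], of n col] Ljw[of j] e_def by simp
      have c3: "3 \<le> card (L v2)" "card (L v2) \<le> 4" using tL2 2 card_sub_colors by auto
      have yform: "y j = (if card (L v2) = 4 then (1 - Pn n ord E'' (Lj j) w j) / 3
           else (1 - Pn n ord E'' (Lj j) w j) / (2 + Pn n ord E'' (Lj j) w (the_elem (colors - L v2))))"
        if jL: "j \<in> L v2" for j
      proof -
        have jL': "j \<in> Lj j v2" using jL Lj2 by simp
        note P1 = Pn_deg1[where j=j and L="Lj j" and u=v2 and E=E' and n=n and ord=ord, OF jL' 2]
        then show ?thesis using yeq[of j] c3 Lj2[of j] N_def w_def E''_def by simp
      qed
      show ?thesis
      proof (cases "card (L v2) = 4")
        case True
        have "y k \<le> 6/13" for k
        proof (cases "k \<in> L v2")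
          case True
          have x0: "0 \<le> Pn n ord E'' (Lj k) w k" using Mw by blast
          show ?thesis using yform[OF True] \<open>card (L v2) = 4\<close> yC[OF x0] by simp
        next
          case False
          then show ?thesis using yeq[of k] Lj2[of k] by (simp add: Pn_notin)
        qed
        then show ?thesis by blast
      next
        case False
        then have c3': "card (L v2) = 3" using c3 by simp
        have "card (colors - L v2) = 1" using c3' tL2(2) colors_fin card_colors
          by (simp add: card_Diff_subset fL2)
        then obtain c where cc: "colors - L v2 = {c}" using card_1_singletonE by blast
        have yf: "y j = (1 - Pn n ord E'' (Lj j) w j) / (2 + Pn n ord E'' (Lj j) w c)" if "j \<in> L v2" for j
          using yform[OF that] c3' cc by simp
        have cL: "c \<notin> L v2" "c \<in> colors" using cc by auto
        show ?thesis
        proof (cases "c = i")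
          case False
          have "y c = 0" using yeq[of c] Lj2[of c] cL by (simp add: Pn_notin)
          then show ?thesis using cL False by blast
        next
          case True
          have TL: "colors - {i} = L v2" using cc True tL2(2) by blast
          show ?thesis
          proof (cases "i \<in> L w")
            case True
            have "y k \<le> 6/13" if k: "k \<in> colors - {i}" for k
            proof -
              have kL: "k \<in> L v2" using k TL by simp
              have x0: "0 \<le> Pn n ord E'' (Lj k) w k" using Mw by blast
              have x': "lb e \<le> Pn n ord E'' (Lj k) w c" using Mw True \<open>c = i\<close> by blast
              show ?thesis
              proof (cases "e \<le> 1")
                case True
                then have "1/6 \<le> Pn n ord E'' (Lj k) w c" using x' by (simp add: lb_def)
                then show ?thesis using yf[OF kL] yA1[OF x0] by simp
              next
                case False
                then have e2: "e = 2" using te by simp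
                have "L w = colors" using card_seteq[OF colors_fin te(2)] te(3) e2 card_colors by simp
                then have "k \<in> L w" using k by simp
                then have "lb e \<le> Pn n ord E'' (Lj k) w k" using Mw by blast
                then have "1/15 \<le> Pn n ord E'' (Lj k) w k" using e2 by (simp add: lb_def)
                moreover have "1/15 \<le> Pn n ord E'' (Lj k) w c" using x' e2 by (simp add: lb_def)
                ultimately show ?thesis using yf[OF kL] yA2 by simp
              qed
            qed
            then show ?thesis by blast
          next
            case False
            have sub: "L w \<subseteq> colors - {i}" using False te(2) by blast
            then have "card (L w) \<le> 3" using card_mono[OF T3(2)] T3(1) by metis
            then have e1: "e \<le> 1" using te by simp
            have fLw: "finite (L w)" using te(2) colors_fin finite_subset by blast
            have "\<not> card (L w) \<le> Suc 0" using te by simp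
            then have "\<not> (\<forall>a\<in>L w. \<forall>b\<in>L w. a = b)" using card_le_Suc0_iff_eq[OF fLw] by blast
            then obtain k1 k2 where k: "k1 \<in> L w" "k2 \<in> L w" "k1 \<noteq> k2" by blast
            have yk: "y k \<le> 5/12" if kw: "k \<in> L w" for k
            proof -
              have kL: "k \<in> L v2" using kw sub TL by blast
              have "lb e \<le> Pn n ord E'' (Lj k) w k" using Mw kw by blast
              then have "1/6 \<le> Pn n ord E'' (Lj k) w k" using e1 by (simp add: lb_def)
              moreover have "Pn n ord E'' (Lj k) w c = 0" using False \<open>c = i\<close> Ljw by (simp add: Pn_notin)
              ultimately show ?thesis using yf[OF kL] yB by simp
            qed
            show ?thesis using k yk sub by blast
          qed
        qed
      qed
    next
      case 3
      have d13: "deg E v1 \<le> 3" using g by (simp add: ginv_def)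
      have "deg E v1 = 3" using 3 dv2 V(3) d13 by linarith
      moreover have l1: "L v1 \<subseteq> colors" "deg E v1 + 1 \<le> card (L v1)" using g vv1 by (auto simp: ginv_def)
      ultimately have "card colors \<le> card (L v1)" using card_colors by simp
      then have "L v1 = colors" using card_seteq[OF colors_fin l1(1)] by simp
      then have "i \<in> L v1" using i by simp
      then show ?thesis using F by blast
    qed
  qed
  have "Pn (Suc N) ord E L v i = (1 - fof N ord E L i v i) * (1 - y i) /
     (\<Sum>j\<in>colors. (1 - fof N ord E L i v j) * (1 - y j))"
    using Pn_deg2[where i=i and L=L and u=v and E=E and n=N and ord=ord, OF iL d2] Lvc y_def by simp
  also have "\<dots> \<le> 13/27"
    by (rule final_ineq[where i=i and f="fof N ord E L i v" and y=y, OF i _ _ _ H]) (use F y_def in blast)+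
  finally show ?thesis using N_def by simp
qed

theorem proposition10:
  fixes V :: "'a set" and E :: "'a set set" and L :: "'a \<Rightarrow> nat set"
    and v :: 'a and i :: nat and ord :: "'a set set \<Rightarrow> 'a \<Rightarrow> 'a list"
  assumes "valid_order ord"
    and "reachable V E L v"
    and "deg E v = 2"
    and "i \<in> colors"
  shows "triangle_at E v \<or> (\<forall>D::int. D \<ge> 2 \<longrightarrow> P ord E L v i D \<le> 13 / 27)"
proof -
  have wf: "wf_graph V E" and allV: "\<forall>u\<in>V. L u \<subseteq> colors \<and> deg E u \<le> 3 \<and> card (L u) \<ge> deg E u + 1"
    and vV: "v \<in> V" and Lv: "card (L v) \<ge> deg E v + 2"
    using assms(2) unfolding reachable_def by auto
  have finV: "finite V" using wf by (simp add: wf_graph_def)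
  have edge: "{y, z} \<subseteq> V" if "{y, z} \<in> E" for y z using wf that by (auto simp: wf_graph_def)
  have nbV: "nbrs E z \<subseteq> V" for z
  proof
    fix y assume "y \<in> nbrs E z"
    then have "{y, z} \<in> E" by (simp add: nbrs_def)
    then show "y \<in> V" using edge by blast
  qed
  have zV: "z \<in> V" if ne: "nbrs E z \<noteq> {}" for z
  proof -
    obtain y where "y \<in> nbrs E z" using ne by blast
    then have "{y, z} \<in> E" by (simp add: nbrs_def)
    then show ?thesis using edge by blast
  qed
  have g: "ginv E L" unfolding ginv_def
  proof (intro allI)
    fix z
    have fz: "finite (nbrs E z)" using finite_subset[OF nbV finV] .
    have d3: "deg E z \<le> 3"
    proof (cases "z \<in> V")
      case True then show ?thesis using allV by blast
    next
      case False
      then have "nbrs E z = {}" using zV by blast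
      then show ?thesis by (simp add: deg_def)
    qed
    have c: "nbrs E z \<noteq> {} \<longrightarrow> L z \<subseteq> colors \<and> deg E z + 1 \<le> card (L z)" using zV allV by auto
    show "finite (nbrs E z) \<and> deg E z \<le> 3 \<and> (nbrs E z \<noteq> {} \<longrightarrow> L z \<subseteq> colors \<and> deg E z + 1 \<le> card (L z))"
      using fz d3 c by blast
  qed
  have t: "tri E L v" unfolding tri_def using g assms(3) allV vV Lv by auto
  show ?thesis
  proof (cases "triangle_at E v")
    case True then show ?thesis by simp
  next
    case False
    then obtain a b where ab: "a \<in> nbrs E v" "b \<in> nbrs E v" "a \<noteq> b" "{a, b} \<notin> E"
      unfolding triangle_at_def by blast
    have fv: "finite (nbrs E v)" using g by (simp add: ginv_def)
    have V: "v1of ord E L i v \<noteq> v2of ord E L i v" "nbrs E v = {v1of ord E L i v, v2of ord E L i v}"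
      using v12[OF assms(1) fv assms(3), of L i] by auto
    have "{a, b} = {v1of ord E L i v, v2of ord E L i v}" using ab(1-3) V by auto
    then have nE: "{v1of ord E L i v, v2of ord E L i v} \<notin> E" using ab(4) by simp
    have "\<forall>D::int. D \<ge> 2 \<longrightarrow> P ord E L v i D \<le> 13 / 27"
    proof (intro allI impI)
      fix D :: int
      assume "2 \<le> D"
      then have "nat D = Suc (Suc (nat D - 2))" by arith
      then have "P ord E L v i D = Pn (Suc (Suc (nat D - 2))) ord E L v i" unfolding P_def by simp
      also have "\<dots> \<le> 13/27" by (rule main_bound[OF assms(1) t assms(3) assms(4) nE])
      finally show "P ord E L v i D \<le> 13 / 27" .
    qed
    then show ?thesis by simp
  qed
qed

end
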